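(* Let $k\ge 2$ and let $A_k$ be the $k\times k^2$ array whose entry in row $r$ and column $j=sk+c$ (with $0\le r,s,c\le k-1$) is $(s+rc)\bmod k$. Suppose that at two distinct L-positions of $A_k$ the L-fillings read are $(a,b,d_1)$ and $(a,b,d_2)$ respectively (same $a$ and same $b$). Then the cells containing $d_1$ and $d_2$ lie in different rows (equivalently, the two cells containing $a$ lie in different rows).
   Context: Array indices are cyclic: rows mod $k$, columns mod $k^2$. Every column index $j\in\{0,\dots,k^2-1\}$ is written uniquely as $j=sk+c$ with $0\le s,c\le k-1$; $s$ is the square number and $c$ the column number (within the square). An L-position is a pair $(i,j)$, and the L-filling read at $(i,j)$ is the triple $(A(i,j),\,A(i+1 \bmod k,\,j),\,A(i+1 \bmod k,\,j+1 \bmod k^2))$: the upper-left cell $a$, the cell $b$ directly below it, and the cell $d$ directly to the right of $b$. Two L-positions are distinct if they differ as pairs $(i,j)$. *)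

theory Defs
  imports Main
begin

text \<open>The array A_k: entry in row r, column j = s*k + c is (s + r*c) mod k.
  Rows are indexed mod k, columns mod k^2.\<close>
definition Ak :: "nat \<Rightarrow> nat \<Rightarrow> nat \<Rightarrow> nat" where
  "Ak k r j = ((j div k) + r * (j mod k)) mod k"

definition L_filling :: "nat \<Rightarrow> nat \<Rightarrow> nat \<Rightarrow> nat \<times> nat \<times> nat" where
  "L_filling k i j = (Ak k i j, Ak k ((i + 1) mod k) j, Ak k ((i + 1) mod k) ((j + 1) mod (k^2)))"

end

theory Submission
  imports Defs "HOL-Number_Theory.Cong"
begin

theorem lemma2:
  fixes k i1 j1 i2 j2 a b d1 d2 :: nat
  assumes "k \<ge> 2"
    and "i1 < k" and "j1 < k^2" and "i2 < k" and "j2 < k^2"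
    and "(i1, j1) \<noteq> (i2, j2)"
    and "L_filling k i1 j1 = (a, b, d1)"
    and "L_filling k i2 j2 = (a, b, d2)"
  shows "(i1 + 1) mod k \<noteq> (i2 + 1) mod k"
proof
  assume H: "(i1 + 1) mod k = (i2 + 1) mod k"
  have ii: "i1 = i2"
  proof -
    have "[i1 + 1 = i2 + 1] (mod k)" using H by (simp add: cong_def)
    hence "[i1 = i2] (mod k)" by (metis cong_add_rcancel_nat)
    thus ?thesis using assms(2,4) by (simp add: cong_def)
  qed
  define s1 c1 s2 c2 where "s1 = j1 div k" "c1 = j1 mod k" "s2 = j2 div k" "c2 = j2 mod k"
  have k0: "k > 0" using assms(1) by simp
  have A: "[s1 + i1*c1 = s2 + i1*c2] (mod k)"
    using assms(7,8) ii unfolding L_filling_def Ak_def s1_c1_s2_c2_def cong_def by auto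
  have B: "[s1 + ((i1+1) mod k)*c1 = s2 + ((i1+1) mod k)*c2] (mod k)"
    using assms(7,8) ii unfolding L_filling_def Ak_def s1_c1_s2_c2_def cong_def by auto
  have B': "[s1 + (i1+1)*c1 = s2 + (i1+1)*c2] (mod k)"
  proof -
    have "[s1 + (i1+1)*c1 = s1 + ((i1+1) mod k)*c1] (mod k)"
      by (intro cong_add cong_refl cong_mult) (simp add: cong_def)
    moreover have "[s2 + ((i1+1) mod k)*c2 = s2 + (i1+1)*c2] (mod k)"
      by (intro cong_add cong_refl cong_mult) (simp add: cong_def)
    ultimately show ?thesis using B by (meson cong_trans)
  qed
  have B2: "[(s1 + i1*c1) + c1 = (s2 + i1*c2) + c2] (mod k)"
    using B' by (simp add: algebra_simps)
  have "[(s1 + i1*c1) + c1 = (s1 + i1*c1) + c2] (mod k)"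
    using B2 A by (meson cong_add cong_refl cong_sym cong_trans)
  hence "[c1 = c2] (mod k)" by (simp add: cong_add_lcancel_nat)
  hence cc: "c1 = c2" using k0 unfolding s1_c1_s2_c2_def cong_def by simp
  have "[s1 = s2] (mod k)" using A cc by (simp add: cong_add_rcancel_nat)
  moreover have "s1 < k" "s2 < k" using assms(3,5) k0 unfolding s1_c1_s2_c2_def
    by (simp_all add: less_mult_imp_div_less power2_eq_square)
  ultimately have "s1 = s2" by (simp add: cong_def)
  hence "j1 = j2" using cc unfolding s1_c1_s2_c2_def by (metis div_mod_decomp)
  thus False using ii assms(6) by simp
qed

end
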